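(* Let $p:\mathbb{R}\to(1,\infty)$ be a measurable function in the class $LH$. For $k>0$ let $H_k=\{x+iy\in\mathbb{C}:y\ge k\}$. If $U\in h^{p(\cdot)}(\mathbb{C}_+)$, then $U$ is bounded on $H_k$ for every $k>0$.
   Context: $\mathbb{C}_+=\{z\in\mathbb{C}:\operatorname{Im}z>0\}$ is the upper half-plane. A measurable $p:\mathbb{R}\to(1,\infty)$ is in the class $LH$ if (i) there is $C_{\log}>0$ with $|p(x)-p(y)|\le C_{\log}/\log(1/|x-y|)$ for all $x,y\in\mathbb{R}$ with $|x-y|<1/2$, and (ii) there are constants $p_\infty\in\mathbb{R}$ and $C_\infty>0$ with $|p(x)-p_\infty|\le C_\infty/\log(e+|x|)$ for all $x\in\mathbb{R}$. The space $h^{p(\cdot)}(\mathbb{C}_+)$ consists of harmonic functions $U$ on $\mathbb{C}_+$ with $\sup_{y>0}\int_{-\infty}^{\infty}|U(x+iy)|^{p(x)}\,dx<\infty$. *)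

theory Defs
  imports "HOL-Analysis.Analysis"
begin

definition upper_half_plane :: "complex set" where
  "upper_half_plane = {z. Im z > 0}"

definition harmonic_on :: "(complex \<Rightarrow> real) \<Rightarrow> complex set \<Rightarrow> bool" where
  "harmonic_on U S \<longleftrightarrow> open S \<and>
     (\<exists>DU :: complex \<Rightarrow> complex \<Rightarrow>\<^sub>L real.
        (\<forall>z\<in>S. (U has_derivative blinfun_apply (DU z)) (at z)) \<and>
        (\<exists>D2U :: complex \<Rightarrow> complex \<Rightarrow>\<^sub>L (complex \<Rightarrow>\<^sub>L real).
           (\<forall>z\<in>S. (DU has_derivative blinfun_apply (D2U z)) (at z)) \<and>
           continuous_on S D2U \<and>
           (\<forall>z\<in>S. D2U z 1 1 + D2U z \<i> \<i> = 0)))"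

definition LH :: "(real \<Rightarrow> real) \<Rightarrow> bool" where
  "LH p \<longleftrightarrow> p \<in> borel_measurable lborel \<and> (\<forall>x. p x > 1) \<and>
     (\<exists>Clog>0. \<forall>x y. \<bar>x - y\<bar> < 1/2 \<longrightarrow> \<bar>p x - p y\<bar> \<le> Clog / ln (1 / \<bar>x - y\<bar>)) \<and>
     (\<exists>pinf Cinf. Cinf > 0 \<and> (\<forall>x. \<bar>p x - pinf\<bar> \<le> Cinf / ln (exp 1 + \<bar>x\<bar>)))"

definition hp_var :: "(real \<Rightarrow> real) \<Rightarrow> (complex \<Rightarrow> real) set" where
  "hp_var p = {U. harmonic_on U upper_half_plane \<and>
     (SUP y\<in>{0<..}. \<integral>\<^sup>+ x. ennreal (\<bar>U (Complex x y)\<bar> powr p x) \<partial>lborel) < \<infinity>}"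

end

theory Submission
  imports Defs "HOL-Complex_Analysis.Complex_Analysis"
begin


lemma line_deriv:
  fixes f :: "'a::real_normed_vector \<Rightarrow> 'b::real_normed_vector"
  assumes "(f has_derivative f') (at (b + t *\<^sub>R v))"
  shows "((\<lambda>t. f (b + t *\<^sub>R v)) has_vector_derivative f' v) (at t)"
proof -
  have l: "linear f'" using assms has_derivative_linear by blast
  have "((\<lambda>t. b + t *\<^sub>R v) has_derivative (\<lambda>h. h *\<^sub>R v)) (at t)"
    by (auto intro!: derivative_eq_intros)
  from has_derivative_compose[OF this assms]
  have "((\<lambda>t. f (b + t *\<^sub>R v)) has_derivative (\<lambda>h. f' (h *\<^sub>R v))) (at t)" .
  moreover have "(\<lambda>h. f' (h *\<^sub>R v)) = (\<lambda>h. h *\<^sub>R f' v)"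
    using l by (simp add: linear_scale)
  ultimately show ?thesis unfolding has_vector_derivative_def by simp
qed

lemma line_deriv_real:
  fixes f :: "'a::real_normed_vector \<Rightarrow> real"
  assumes "(f has_derivative f') (at (b + t *\<^sub>R v))"
  shows "((\<lambda>t. f (b + t *\<^sub>R v)) has_real_derivative f' v) (at t)"
  using line_deriv[OF assms] by (simp add: has_real_derivative_iff_has_vector_derivative)

lemma apply_deriv:
  fixes DU :: "'a::real_normed_vector \<Rightarrow> 'a \<Rightarrow>\<^sub>L real"
  assumes "(DU has_derivative blinfun_apply D) (at z)"
  shows "((\<lambda>z. DU z c) has_derivative (\<lambda>h. D h c)) (at z)"
proof -
  have "bounded_linear (\<lambda>L::'a \<Rightarrow>\<^sub>L real. blinfun_apply L c)" by simp
  from bounded_linear.has_derivative[OF this assms] show ?thesis .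
qed

lemma aux_abs: "\<bar>p - a\<bar> < \<bar>a - b\<bar>/2 \<Longrightarrow> \<bar>q - b\<bar> < \<bar>a - b\<bar>/2 \<Longrightarrow> p = (q::real) \<Longrightarrow> False"
  by (simp add: abs_if split: if_splits)

lemma clairaut:
  fixes U :: "complex \<Rightarrow> real" and DU :: "complex \<Rightarrow> complex \<Rightarrow>\<^sub>L real"
    and D2U :: "complex \<Rightarrow> complex \<Rightarrow>\<^sub>L (complex \<Rightarrow>\<^sub>L real)"
  assumes S: "open S" and w: "w \<in> S"
    and dU: "\<forall>z\<in>S. (U has_derivative blinfun_apply (DU z)) (at z)"
    and d2U: "\<forall>z\<in>S. (DU has_derivative blinfun_apply (D2U z)) (at z)"
    and cont: "continuous_on S D2U"
  shows "D2U w \<i> 1 = D2U w 1 \<i>"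
proof (rule ccontr)
  assume ne: "D2U w \<i> 1 \<noteq> D2U w 1 \<i>"
  define e where "e = \<bar>D2U w \<i> 1 - D2U w 1 \<i>\<bar>"
  have e: "e > 0" using ne by (simp add: e_def)
  obtain d where d: "d > 0" "ball w d \<subseteq> S" using S w open_contains_ball by blast
  have "continuous (at w) D2U" using cont S w continuous_on_eq_continuous_at by blast
  then obtain d' where d': "d' > 0" "\<And>p. dist p w < d' \<Longrightarrow> dist (D2U p) (D2U w) < e/2"
    unfolding continuous_at_eps_delta using e by (meson half_gt_zero)
  have close: "\<bar>D2U p a b - D2U w a b\<bar> < e/2" if "dist p w < d'" "norm a = 1" "norm b = 1" for p a b
  proof -
    have "\<bar>D2U p a b - D2U w a b\<bar> = norm ((D2U p - D2U w) a b)"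
      by (simp add: blinfun.diff_left)
    also have "\<dots> \<le> norm ((D2U p - D2U w) a) * norm b" by (rule norm_blinfun)
    also have "\<dots> \<le> norm (D2U p - D2U w) * norm a * norm b"
      using norm_blinfun[of "D2U p - D2U w" a] by (simp add: that)
    also have "\<dots> < e/2" using d'(2)[OF that(1)] by (simp add: that dist_norm)
    finally show ?thesis .
  qed
  define s where "s = min (d/4) (d'/4)"
  have s: "s > 0" "2 * s < d" "2 * s < d'" using d d' by (auto simp: s_def)
  have inS: "w + a *\<^sub>R 1 + b *\<^sub>R \<i> \<in> S" if "0 \<le> a" "a \<le> s" "0 \<le> b" "b \<le> s" for a b
  proof -
    have "norm (a *\<^sub>R (1::complex) + b *\<^sub>R \<i>) \<le> norm (a *\<^sub>R (1::complex)) + norm (b *\<^sub>R \<i>)"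
      by (rule norm_triangle_ineq)
    also have "\<dots> \<le> 2 * s" using that by simp
    finally have n: "norm (a *\<^sub>R (1::complex) + b *\<^sub>R \<i>) < d" using s by linarith
    have eq: "w - (w + a *\<^sub>R 1 + b *\<^sub>R \<i>) = -(a *\<^sub>R 1 + b *\<^sub>R \<i>)" by simp
    have "w + a *\<^sub>R 1 + b *\<^sub>R \<i> \<in> ball w d"
      unfolding mem_ball dist_norm eq norm_minus_cancel using n .
    then show ?thesis using d by blast
  qed
  define A where "A = U (w + s *\<^sub>R 1 + s *\<^sub>R \<i>) - U (w + s *\<^sub>R 1) - U (w + 0 *\<^sub>R 1 + s *\<^sub>R \<i>) + U (w + 0 *\<^sub>R 1 + 0 *\<^sub>R \<i>)"
  have "\<exists>x. 0 < x \<and> x < s \<and>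
     (\<lambda>x. U ((w + s *\<^sub>R \<i>) + x *\<^sub>R 1) - U (w + x *\<^sub>R 1)) s - (\<lambda>x. U ((w + s *\<^sub>R \<i>) + x *\<^sub>R 1) - U (w + x *\<^sub>R 1)) 0
       = (s - 0) * (DU ((w + s *\<^sub>R \<i>) + x *\<^sub>R 1) 1 - DU (w + x *\<^sub>R 1) 1)"
  proof (rule MVT2)
    fix x assume x: "0 \<le> x" "x \<le> s"
    have m1: "(w + s *\<^sub>R \<i>) + x *\<^sub>R 1 \<in> S" using inS[of x s] x s by (simp add: add_ac)
    have m2: "w + x *\<^sub>R 1 \<in> S" using inS[of x 0] x s by simp
    show "((\<lambda>x. U ((w + s *\<^sub>R \<i>) + x *\<^sub>R 1) - U (w + x *\<^sub>R 1)) has_real_derivative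
        (DU ((w + s *\<^sub>R \<i>) + x *\<^sub>R 1) 1 - DU (w + x *\<^sub>R 1) 1)) (at x)"
      by (intro DERIV_diff line_deriv_real) (use dU m1 m2 in auto)
  qed (use s in auto)
  then obtain x1 where x1: "0 < x1" "x1 < s"
    "A = s * (DU ((w + s *\<^sub>R \<i>) + x1 *\<^sub>R 1) 1 - DU (w + x1 *\<^sub>R 1) 1)"
    unfolding A_def by (auto simp: add_ac)
  have "\<exists>y. 0 < y \<and> y < s \<and>
     (\<lambda>y. DU ((w + x1 *\<^sub>R 1) + y *\<^sub>R \<i>) 1) s - (\<lambda>y. DU ((w + x1 *\<^sub>R 1) + y *\<^sub>R \<i>) 1) 0
       = (s - 0) * D2U ((w + x1 *\<^sub>R 1) + y *\<^sub>R \<i>) \<i> 1"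
  proof (rule MVT2)
    fix y assume y: "0 \<le> y" "y \<le> s"
    have m1: "(w + x1 *\<^sub>R 1) + y *\<^sub>R \<i> \<in> S" using inS[of x1 y] x1 y by simp
    show "((\<lambda>y. DU ((w + x1 *\<^sub>R 1) + y *\<^sub>R \<i>) 1) has_real_derivative
        D2U ((w + x1 *\<^sub>R 1) + y *\<^sub>R \<i>) \<i> 1) (at y)"
      by (rule line_deriv_real[OF apply_deriv]) (use d2U m1 in auto)
  qed (use s in auto)
  then obtain y1 where y1: "0 < y1" "y1 < s"
    "DU (w + x1 *\<^sub>R 1 + s *\<^sub>R \<i>) 1 - DU (w + x1 *\<^sub>R 1) 1 = s * D2U (w + x1 *\<^sub>R 1 + y1 *\<^sub>R \<i>) \<i> 1"
    by auto
  have A1: "A = s * s * D2U (w + x1 *\<^sub>R 1 + y1 *\<^sub>R \<i>) \<i> 1"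
    using x1(3) y1(3) by (simp add: add_ac)
  have "\<exists>y. 0 < y \<and> y < s \<and>
     (\<lambda>y. U ((w + s *\<^sub>R 1) + y *\<^sub>R \<i>) - U (w + y *\<^sub>R \<i>)) s - (\<lambda>y. U ((w + s *\<^sub>R 1) + y *\<^sub>R \<i>) - U (w + y *\<^sub>R \<i>)) 0
       = (s - 0) * (DU ((w + s *\<^sub>R 1) + y *\<^sub>R \<i>) \<i> - DU (w + y *\<^sub>R \<i>) \<i>)"
  proof (rule MVT2)
    fix y assume y: "0 \<le> y" "y \<le> s"
    have m1: "(w + s *\<^sub>R 1) + y *\<^sub>R \<i> \<in> S" using inS[of s y] y s by (simp add: add_ac)
    have m2: "w + y *\<^sub>R \<i> \<in> S" using inS[of 0 y] y s by simp
    show "((\<lambda>y. U ((w + s *\<^sub>R 1) + y *\<^sub>R \<i>) - U (w + y *\<^sub>R \<i>)) has_real_derivative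
        (DU ((w + s *\<^sub>R 1) + y *\<^sub>R \<i>) \<i> - DU (w + y *\<^sub>R \<i>) \<i>)) (at y)"
      by (intro DERIV_diff line_deriv_real) (use dU m1 m2 in auto)
  qed (use s in auto)
  then obtain y2 where y2: "0 < y2" "y2 < s"
    "A = s * (DU ((w + s *\<^sub>R 1) + y2 *\<^sub>R \<i>) \<i> - DU (w + y2 *\<^sub>R \<i>) \<i>)"
    unfolding A_def by (auto simp: add_ac)
  have "\<exists>x. 0 < x \<and> x < s \<and>
     (\<lambda>x. DU ((w + y2 *\<^sub>R \<i>) + x *\<^sub>R 1) \<i>) s - (\<lambda>x. DU ((w + y2 *\<^sub>R \<i>) + x *\<^sub>R 1) \<i>) 0
       = (s - 0) * D2U ((w + y2 *\<^sub>R \<i>) + x *\<^sub>R 1) 1 \<i>"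
  proof (rule MVT2)
    fix x assume x: "0 \<le> x" "x \<le> s"
    have m1: "(w + y2 *\<^sub>R \<i>) + x *\<^sub>R 1 \<in> S" using inS[of x y2] x y2 by (simp add: add_ac)
    show "((\<lambda>x. DU ((w + y2 *\<^sub>R \<i>) + x *\<^sub>R 1) \<i>) has_real_derivative
        D2U ((w + y2 *\<^sub>R \<i>) + x *\<^sub>R 1) 1 \<i>) (at x)"
      by (rule line_deriv_real[OF apply_deriv]) (use d2U m1 in auto)
  qed (use s in auto)
  then obtain x2 where x2: "0 < x2" "x2 < s"
    "DU (w + y2 *\<^sub>R \<i> + s *\<^sub>R 1) \<i> - DU (w + y2 *\<^sub>R \<i>) \<i> = s * D2U (w + y2 *\<^sub>R \<i> + x2 *\<^sub>R 1) 1 \<i>"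
    by auto
  have A2: "A = s * s * D2U (w + x2 *\<^sub>R 1 + y2 *\<^sub>R \<i>) 1 \<i>"
    using y2(3) x2(3) by (simp add: add_ac)
  have eq: "D2U (w + x1 *\<^sub>R 1 + y1 *\<^sub>R \<i>) \<i> 1 = D2U (w + x2 *\<^sub>R 1 + y2 *\<^sub>R \<i>) 1 \<i>"
    using A1 A2 s by simp
  have dist: "dist (w + a *\<^sub>R 1 + b *\<^sub>R \<i>) w < d'" if "0 < a" "a < s" "0 < b" "b < s" for a b
  proof -
    have "norm (a *\<^sub>R (1::complex) + b *\<^sub>R \<i>) \<le> norm (a *\<^sub>R (1::complex)) + norm (b *\<^sub>R \<i>)"
      by (rule norm_triangle_ineq)
    also have "\<dots> < 2 * s" using that by simp
    finally show ?thesis using s by (simp add: dist_norm add.assoc)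
  qed
  have c1: "\<bar>D2U (w + x1 *\<^sub>R 1 + y1 *\<^sub>R \<i>) \<i> 1 - D2U w \<i> 1\<bar> < e/2"
    by (rule close) (use dist x1 y1 in auto)
  have c2: "\<bar>D2U (w + x2 *\<^sub>R 1 + y2 *\<^sub>R \<i>) 1 \<i> - D2U w 1 \<i>\<bar> < e/2"
    by (rule close) (use dist x2 y2 in auto)
  show False using aux_abs[OF c1[unfolded e_def] c2[unfolded e_def] eq] .
qed



lemma lin_split:
  fixes L :: "complex \<Rightarrow>\<^sub>L 'b::real_normed_vector"
  shows "L h = Re h *\<^sub>R L 1 + Im h *\<^sub>R L \<i>"
proof -
  have "h = Re h *\<^sub>R 1 + Im h *\<^sub>R \<i>" by (simp add: complex_eq_iff)
  then have "L h = L (Re h *\<^sub>R 1 + Im h *\<^sub>R \<i>)" by simp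
  also have "\<dots> = Re h *\<^sub>R L 1 + Im h *\<^sub>R L \<i>"
    by (simp add: blinfun.add_right blinfun.scaleR_right)
  finally show ?thesis .
qed

lemma harmonic_re:
  assumes "harmonic_on U upper_half_plane"
  obtains F where "F holomorphic_on upper_half_plane" "\<And>z. z \<in> upper_half_plane \<Longrightarrow> U z = Re (F z)"
proof -
  let ?H = upper_half_plane
  have oH: "open ?H" and cH: "convex ?H"
    by (auto simp: upper_half_plane_def open_halfspace_Im_gt convex_halfspace_Im_gt)
  obtain DU :: "complex \<Rightarrow> complex \<Rightarrow>\<^sub>L real" and D2U :: "complex \<Rightarrow> complex \<Rightarrow>\<^sub>L (complex \<Rightarrow>\<^sub>L real)"
    where dU: "\<forall>z\<in>?H. (U has_derivative blinfun_apply (DU z)) (at z)"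
      and d2U: "\<forall>z\<in>?H. (DU has_derivative blinfun_apply (D2U z)) (at z)"
      and cont: "continuous_on ?H D2U"
      and lap: "\<forall>z\<in>?H. D2U z 1 1 + D2U z \<i> \<i> = 0"
    using assms unfolding harmonic_on_def by blast
  define f where "f z = complex_of_real (DU z 1) - \<i> * complex_of_real (DU z \<i>)" for z
  have fd: "(f has_field_derivative (complex_of_real (D2U z 1 1) - \<i> * complex_of_real (D2U z 1 \<i>))) (at z)"
    if z: "z \<in> ?H" for z
  proof -
    have sym: "D2U z \<i> 1 = D2U z 1 \<i>" by (rule clairaut[OF oH z dU d2U cont])
    have l: "D2U z \<i> \<i> = - D2U z 1 1" using lap z by (simp add: add_eq_0_iff)
    have d1: "((\<lambda>z. DU z 1) has_derivative (\<lambda>h. D2U z h 1)) (at z)"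
      by (rule apply_deriv) (use d2U z in auto)
    have d2: "((\<lambda>z. DU z \<i>) has_derivative (\<lambda>h. D2U z h \<i>)) (at z)"
      by (rule apply_deriv) (use d2U z in auto)
    have "(f has_derivative (\<lambda>h. complex_of_real (D2U z h 1) - \<i> * complex_of_real (D2U z h \<i>))) (at z)"
      unfolding f_def by (intro derivative_eq_intros d1 d2) (auto simp: d2U z)
    moreover have "(\<lambda>h. complex_of_real (D2U z h 1) - \<i> * complex_of_real (D2U z h \<i>))
        = (*) (complex_of_real (D2U z 1 1) - \<i> * complex_of_real (D2U z 1 \<i>))"
    proof
      fix h
      have a: "D2U z h 1 = Re h * D2U z 1 1 + Im h * D2U z \<i> 1"
        by (subst lin_split[of "D2U z"]) (simp add: blinfun.add_left blinfun.scaleR_left)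
      have b: "D2U z h \<i> = Re h * D2U z 1 \<i> + Im h * D2U z \<i> \<i>"
        by (subst lin_split[of "D2U z"]) (simp add: blinfun.add_left blinfun.scaleR_left)
      show "complex_of_real (D2U z h 1) - \<i> * complex_of_real (D2U z h \<i>)
          = (complex_of_real (D2U z 1 1) - \<i> * complex_of_real (D2U z 1 \<i>)) * h"
        by (simp add: a b sym l complex_eq_iff algebra_simps)
    qed
    ultimately show ?thesis by (simp add: has_field_derivative_def)
  qed
  have "f holomorphic_on ?H"
    using fd by (meson field_differentiable_def holomorphic_on_def field_differentiable_at_within)
  then obtain G where G: "\<And>x. x \<in> ?H \<Longrightarrow> (G has_field_derivative f x) (at x within ?H)"
    using holomorphic_convex_primitive'[OF cH oH] by blast
  have G': "(G has_field_derivative f x) (at x)" if "x \<in> ?H" for x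
    using G[OF that] at_within_open[OF that oH] by simp
  have "\<exists>c. \<forall>x\<in>?H. U x - Re (G x) = c"
  proof (rule has_derivative_zero_constant[OF cH])
    fix x assume x: "x \<in> ?H"
    have "((\<lambda>x. U x - Re (G x)) has_derivative (\<lambda>h. DU x h - Re (f x * h))) (at x)"
      using dU x G'[OF x] by (auto intro!: derivative_eq_intros simp: has_field_derivative_def)
    moreover have "(\<lambda>h. DU x h - Re (f x * h)) = (\<lambda>h. 0)"
    proof
      fix h show "DU x h - Re (f x * h) = 0"
        by (subst lin_split[of "DU x"]) (simp add: f_def algebra_simps)
    qed
    ultimately show "((\<lambda>x. U x - Re (G x)) has_derivative (\<lambda>h. 0)) (at x within ?H)"
      by (simp add: has_derivative_at_withinI)
  qed
  then obtain c where c: "\<And>x. x \<in> ?H \<Longrightarrow> U x - Re (G x) = c" by blast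
  show ?thesis
  proof (rule that[of "\<lambda>z. G z + complex_of_real c"])
    show "(\<lambda>z. G z + complex_of_real c) holomorphic_on ?H"
      using G' by (intro holomorphic_intros) (meson field_differentiable_def holomorphic_on_def field_differentiable_at_within)
    fix z assume "z \<in> ?H" then show "U z = Re (G z + complex_of_real c)" using c by force
  qed
qed



lemma mean_value_holo:
  assumes hol: "F holomorphic_on S" and S: "open S" and sub: "cball z r \<subseteq> S" and r: "r > 0"
  shows "((\<lambda>t::real. F (z + complex_of_real r * exp (2 * of_real pi * \<i> * complex_of_real t))) has_integral F z) {0..1}"
proof -
  have contf: "continuous_on (cball z r) F"
    using hol sub holomorphic_on_imp_continuous_on continuous_on_subset by blast
  have holf: "F holomorphic_on ball z r" using hol sub ball_subset_cball holomorphic_on_subset by blast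
  have "((\<lambda>u. F u / (u - z)) has_contour_integral (2 * of_real pi * \<i> * F z)) (circlepath z r)"
    by (rule Cauchy_integral_circlepath[OF contf holf]) (use r in simp)
  then have I: "((\<lambda>t::real. F (circlepath z r t) / (circlepath z r t - z) * vector_derivative (circlepath z r) (at t within {0..1}))
      has_integral (2 * of_real pi * \<i> * F z)) {0..1}"
    unfolding has_contour_integral_def by simp
  have "((\<lambda>t::real. 2 * of_real pi * \<i> * F (z + complex_of_real r * exp (2 * of_real pi * \<i> * complex_of_real t)))
      has_integral (2 * of_real pi * \<i> * F z)) {0..1}"
  proof (rule has_integral_spike_finite[OF _ _ I, where S = "{}"])
    fix t :: real assume "t \<in> {0..1} - {}"
    then have t0: "0 \<le> t" and t1: "t \<le> 1" by auto
    note vd = vector_derivative_circlepath01[OF t0 t1, of z r]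
    have ne: "exp (2 * of_real pi * \<i> * complex_of_real t) \<noteq> 0" by simp
    show "2 * of_real pi * \<i> * F (z + complex_of_real r * exp (2 * of_real pi * \<i> * complex_of_real t)) =
      F (circlepath z r t) / (circlepath z r t - z) * vector_derivative (circlepath z r) (at t within {0..1})"
      using r ne unfolding vd unfolding circlepath
      by (simp add: field_simps)
  qed simp
  from has_integral_mult_right[OF this, of "inverse (2 * of_real pi * \<i>)"]
  show ?thesis by (simp add: field_simps)
qed

lemma mean_value_re:
  assumes hol: "F holomorphic_on S" and S: "open S" and sub: "cball z r \<subseteq> S" and r: "r > 0"
  shows "((\<lambda>t::real. Re (F (z + complex_of_real r * exp (2 * of_real pi * \<i> * complex_of_real t)))) has_integral Re (F z)) {0..1}"
  using has_integral_linear[OF mean_value_holo[OF assms] bounded_linear_Re] by (simp add: o_def)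



lemma measurable_Complex[measurable]:
  assumes [measurable]: "f \<in> borel_measurable M" "g \<in> borel_measurable M"
  shows "(\<lambda>x. Complex (f x) (g x)) \<in> borel_measurable M"
proof -
  have "(\<lambda>x. Complex (f x) (g x)) = (\<lambda>x. complex_of_real (f x) + \<i> * complex_of_real (g x))"
    by (simp add: Complex_eq)
  moreover have "(\<lambda>x. complex_of_real (f x) + \<i> * complex_of_real (g x)) \<in> borel_measurable M"
    by measurable
  ultimately show ?thesis by simp
qed

lemma piece:
  fixes \<Phi> g g' h :: "real \<Rightarrow> real"
  assumes \<Phi>m[measurable]: "\<Phi> \<in> borel_measurable borel"
    and derivg: "\<And>t. t \<in> {a..b} \<Longrightarrow> (g has_real_derivative g' t) (at t)"
    and contg': "continuous_on {a..b} g'" and g'0: "\<And>t. t \<in> {a..b} \<Longrightarrow> g' t \<ge> 0" and ab: "a \<le> b"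
    and ga: "g a = -r" and gb: "g b = r"
    and eq: "\<And>t. a < t \<Longrightarrow> t < b \<Longrightarrow> h t = \<Phi> (g t) / (2 * pi * sqrt(r\<^sup>2 - (g t)\<^sup>2)) * g' t"
  shows "(\<integral>\<^sup>+t. ennreal (h t) * indicator {a..b} t \<partial>lborel)
       = (\<integral>\<^sup>+x. ennreal (\<Phi> x / (2 * pi * sqrt(r\<^sup>2 - x\<^sup>2))) * indicator {-r..r} x \<partial>lborel)"
proof -
  define f where "f x = \<Phi> x / (2 * pi * sqrt(r\<^sup>2 - x\<^sup>2))" for x
  have fm: "set_borel_measurable borel {g a..g b} f"
    unfolding set_borel_measurable_def f_def by measurable
  have S: "(\<integral>\<^sup>+x. f x * indicator {g a..g b} x \<partial>lborel) =
             (\<integral>\<^sup>+x. f (g x) * g' x * indicator {a..b} x \<partial>lborel)"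
    by (rule nn_integral_substitution[OF fm derivg contg' g'0 ab])
  have "(\<integral>\<^sup>+t. ennreal (h t) * indicator {a..b} t \<partial>lborel) = (\<integral>\<^sup>+x. f (g x) * g' x * indicator {a..b} x \<partial>lborel)"
  proof (rule nn_integral_cong_AE)
    show "AE t in lborel. ennreal (h t) * indicator {a..b} t = ennreal (f (g t) * g' t * indicator {a..b} t)"
      using AE_lborel_singleton[of a] AE_lborel_singleton[of b]
    proof eventually_elim
      case (elim t)
      then show ?case using eq[of t] by (auto simp: f_def split: split_indicator)
    qed
  qed
  also have "\<dots> = (\<integral>\<^sup>+x. f x * indicator {g a..g b} x \<partial>lborel)" using S by simp
  also have "\<dots> = (\<integral>\<^sup>+x. ennreal (\<Phi> x / (2 * pi * sqrt(r\<^sup>2 - x\<^sup>2))) * indicator {-r..r} x \<partial>lborel)"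
    by (rule nn_integral_cong) (simp add: f_def ga gb split: split_indicator)
  finally show ?thesis .
qed

lemma exp_circ: "complex_of_real r * exp (2 * of_real pi * \<i> * complex_of_real t) = Complex (r * cos (2 * pi * t)) (r * sin (2 * pi * t))"
  by (simp add: complex_eq_iff Re_exp Im_exp)

lemma semicircle:
  fixes G :: "complex \<Rightarrow> real"
  assumes Gm[measurable]: "G \<in> borel_measurable borel" and G0: "\<And>w. G w \<ge> 0" and r: "r > 0"
  shows "(\<integral>\<^sup>+t. ennreal (G (z + complex_of_real r * exp (2 * of_real pi * \<i> * complex_of_real t))) * indicator {0..1} t \<partial>lborel)
    \<le> (\<integral>\<^sup>+x. ennreal ((G (z + Complex (-x) (sqrt (r\<^sup>2 - x\<^sup>2))) + G (z + Complex x (- sqrt (r\<^sup>2 - x\<^sup>2))))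
          / (2 * pi * sqrt (r\<^sup>2 - x\<^sup>2))) * indicator {-r..r} x \<partial>lborel)"
proof -
  define P where "P t = z + Complex (r * cos (2 * pi * t)) (r * sin (2 * pi * t))" for t
  have P: "z + complex_of_real r * exp (2 * of_real pi * \<i> * complex_of_real t) = P t" for t
    by (simp add: P_def exp_circ)
  define \<Phi>1 where "\<Phi>1 x = G (z + Complex (-x) (sqrt (r\<^sup>2 - x\<^sup>2)))" for x
  define \<Phi>2 where "\<Phi>2 x = G (z + Complex x (- sqrt (r\<^sup>2 - x\<^sup>2)))" for x
  have m1[measurable]: "\<Phi>1 \<in> borel_measurable borel" unfolding \<Phi>1_def by measurable
  have m2[measurable]: "\<Phi>2 \<in> borel_measurable borel" unfolding \<Phi>2_def by measurable
  have Pm[measurable]: "(\<lambda>t. G (P t)) \<in> borel_measurable borel" unfolding P_def by measurable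
  have sq: "sqrt (r\<^sup>2 - (r * cos u)\<^sup>2) = r * \<bar>sin u\<bar>" for u
  proof -
    have "r\<^sup>2 - (r * cos u)\<^sup>2 = (r * sin u)\<^sup>2"
      by (simp add: power_mult_distrib sin_squared_eq algebra_simps)
    then show ?thesis using r by (simp add: abs_mult)
  qed
  have I1: "(\<integral>\<^sup>+t. ennreal (G (P t)) * indicator {0..1/2} t \<partial>lborel)
       = (\<integral>\<^sup>+x. ennreal (\<Phi>1 x / (2 * pi * sqrt(r\<^sup>2 - x\<^sup>2))) * indicator {-r..r} x \<partial>lborel)"
  proof (rule piece[where g = "\<lambda>t. - r * cos (2 * pi * t)" and g' = "\<lambda>t. 2 * pi * r * sin (2 * pi * t)"])
    fix t :: real assume "t \<in> {0..1/2}"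
    then have "0 \<le> 2 * pi * t" "2 * pi * t \<le> pi" by auto
    then have "sin (2 * pi * t) \<ge> 0" by (rule sin_ge_zero)
    then show "0 \<le> 2 * pi * r * sin (2 * pi * t)" using r by simp
  next
    fix t :: real assume "0 < t" "t < 1/2"
    then have "0 < 2 * pi * t" "2 * pi * t < pi" by auto
    then have s: "sin (2 * pi * t) > 0" by (rule sin_gt_zero)
    show "G (P t) = \<Phi>1 (- r * cos (2 * pi * t)) / (2 * pi * sqrt (r\<^sup>2 - (- r * cos (2 * pi * t))\<^sup>2)) * (2 * pi * r * sin (2 * pi * t))"
      using s r sq[of "2 * pi * t"] by (simp add: \<Phi>1_def P_def)
  qed (auto intro!: derivative_eq_intros continuous_intros)
  have I2: "(\<integral>\<^sup>+t. ennreal (G (P t)) * indicator {1/2..1} t \<partial>lborel)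
       = (\<integral>\<^sup>+x. ennreal (\<Phi>2 x / (2 * pi * sqrt(r\<^sup>2 - x\<^sup>2))) * indicator {-r..r} x \<partial>lborel)"
  proof (rule piece[where g = "\<lambda>t. r * cos (2 * pi * t)" and g' = "\<lambda>t. - (2 * pi * r * sin (2 * pi * t))"])
    fix t :: real assume "t \<in> {1/2..1}"
    then have "0 \<le> 2 * pi * t - pi" "2 * pi * t - pi \<le> pi" by auto
    then have "sin (2 * pi * t - pi) \<ge> 0" by (rule sin_ge_zero)
    then show "0 \<le> - (2 * pi * r * sin (2 * pi * t))" using r by (simp add: sin_diff mult_nonneg_nonpos)
  next
    fix t :: real assume "1/2 < t" "t < 1"
    then have "0 < 2 * pi * t - pi" "2 * pi * t - pi < pi" by auto
    then have "sin (2 * pi * t - pi) > 0" by (rule sin_gt_zero)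
    then have s: "sin (2 * pi * t) < 0" by (simp add: sin_diff)
    show "G (P t) = \<Phi>2 (r * cos (2 * pi * t)) / (2 * pi * sqrt (r\<^sup>2 - (r * cos (2 * pi * t))\<^sup>2)) * (- (2 * pi * r * sin (2 * pi * t)))"
      using s r sq[of "2 * pi * t"] by (simp add: \<Phi>2_def P_def)
  qed (auto intro!: derivative_eq_intros continuous_intros)
  have "(\<integral>\<^sup>+t. ennreal (G (P t)) * indicator {0..1} t \<partial>lborel)
      \<le> (\<integral>\<^sup>+t. ennreal (G (P t)) * indicator {0..1/2} t + ennreal (G (P t)) * indicator {1/2..1} t \<partial>lborel)"
    by (rule nn_integral_mono) (auto split: split_indicator)
  also have "\<dots> = (\<integral>\<^sup>+t. ennreal (G (P t)) * indicator {0..1/2} t \<partial>lborel) + (\<integral>\<^sup>+t. ennreal (G (P t)) * indicator {1/2..1} t \<partial>lborel)"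
    by (rule nn_integral_add) auto
  also have "\<dots> = (\<integral>\<^sup>+x. ennreal (\<Phi>1 x / (2 * pi * sqrt(r\<^sup>2 - x\<^sup>2))) * indicator {-r..r} x
      + ennreal (\<Phi>2 x / (2 * pi * sqrt(r\<^sup>2 - x\<^sup>2))) * indicator {-r..r} x \<partial>lborel)"
    unfolding I1 I2 by (rule nn_integral_add[symmetric]) auto
  also have "\<dots> = (\<integral>\<^sup>+x. ennreal ((G (z + Complex (-x) (sqrt (r\<^sup>2 - x\<^sup>2))) + G (z + Complex x (- sqrt (r\<^sup>2 - x\<^sup>2))))
          / (2 * pi * sqrt (r\<^sup>2 - x\<^sup>2))) * indicator {-r..r} x \<partial>lborel)"
  proof (rule nn_integral_cong)
    fix x
    show "ennreal (\<Phi>1 x / (2 * pi * sqrt(r\<^sup>2 - x\<^sup>2))) * indicator {-r..r} x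
      + ennreal (\<Phi>2 x / (2 * pi * sqrt(r\<^sup>2 - x\<^sup>2))) * indicator {-r..r} x =
      ennreal ((G (z + Complex (-x) (sqrt (r\<^sup>2 - x\<^sup>2))) + G (z + Complex x (- sqrt (r\<^sup>2 - x\<^sup>2))))
          / (2 * pi * sqrt (r\<^sup>2 - x\<^sup>2))) * indicator {-r..r} x"
    proof (cases "x \<in> {-r..r}")
      case True
      then have "\<bar>x\<bar> \<le> \<bar>r\<bar>" using r by auto
      then have "x\<^sup>2 \<le> r\<^sup>2" by (simp add: abs_le_square_iff)
      then have "sqrt (r\<^sup>2 - x\<^sup>2) \<ge> 0" by simp
      then have "\<Phi>1 x / (2 * pi * sqrt(r\<^sup>2 - x\<^sup>2)) \<ge> 0" "\<Phi>2 x / (2 * pi * sqrt(r\<^sup>2 - x\<^sup>2)) \<ge> 0"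
        by (auto simp: \<Phi>1_def \<Phi>2_def intro!: divide_nonneg_nonneg G0)
      then show ?thesis
        by (simp add: \<Phi>1_def \<Phi>2_def add_divide_distrib ennreal_plus distrib_right)
    qed simp
  qed
  finally show ?thesis unfolding P .
qed



lemma radial:
  fixes K :: "real \<Rightarrow> real \<Rightarrow> real"
  assumes Km[measurable]: "(\<lambda>y. K x y) \<in> borel_measurable borel" and K0: "\<And>y. K x y \<ge> 0" and R: "R > 0"
  shows "(\<integral>\<^sup>+r. indicator {R/2..R} r * (ennreal (K x (sqrt (r\<^sup>2 - x\<^sup>2)) / (2 * pi * sqrt (r\<^sup>2 - x\<^sup>2))) * indicator {-r..r} x) \<partial>lborel)
    \<le> indicator {-R..R} x * (ennreal (1 / (pi * R)) * (\<integral>\<^sup>+y. ennreal (K x y) * indicator {0..R} y \<partial>lborel))"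
proof (cases "\<bar>x\<bar> \<le> R")
  case False
  have z: "(\<lambda>r. indicator {R/2..R} r * (ennreal (K x (sqrt (r\<^sup>2 - x\<^sup>2)) / (2 * pi * sqrt (r\<^sup>2 - x\<^sup>2))) * indicator {-r..r} x)) = (\<lambda>r. 0)"
    using False by (intro ext) (auto simp: indicator_def abs_if split: if_splits)
  show ?thesis unfolding z by simp
next
  case True
  define m where "m = max \<bar>x\<bar> (R/2)"
  have m: "m \<ge> \<bar>x\<bar>" "m \<ge> R/2" "m \<le> R" "m > 0" using True R by (auto simp: m_def)
  define f where "f r = K x (sqrt (r\<^sup>2 - x\<^sup>2)) / (2 * pi * sqrt (r\<^sup>2 - x\<^sup>2))" for r
  define a where "a = sqrt (m\<^sup>2 - x\<^sup>2)"
  define b where "b = sqrt (R\<^sup>2 - x\<^sup>2)"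
  define g where "g y = sqrt (x\<^sup>2 + y\<^sup>2)" for y
  define g' where "g' y = y / sqrt (x\<^sup>2 + y\<^sup>2)" for y
  have xm: "x\<^sup>2 \<le> m\<^sup>2" using m by (simp add: abs_le_square_iff[symmetric])
  have xR: "x\<^sup>2 \<le> R\<^sup>2" using True R by (simp add: abs_le_square_iff[symmetric])
  have a0: "a \<ge> 0" using xm by (simp add: a_def)
  have ga: "g a = m" using xm m by (simp add: g_def a_def)
  have gb: "g b = R" using xR R by (simp add: g_def b_def)
  have ab: "a \<le> b" unfolding a_def b_def using m by (auto intro!: real_sqrt_le_mono power_mono)
  have "sqrt (R\<^sup>2 - x\<^sup>2) \<le> sqrt (R\<^sup>2)" by (rule real_sqrt_le_mono) simp
  then have bR: "b \<le> R" unfolding b_def using R by simp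
  have pos: "x\<^sup>2 + y\<^sup>2 \<ge> m\<^sup>2" if "y \<in> {a..b}" for y
  proof -
    have "a\<^sup>2 \<le> y\<^sup>2" using that a0 by (auto intro!: power_mono)
    moreover have "a\<^sup>2 = m\<^sup>2 - x\<^sup>2" using xm by (simp add: a_def)
    ultimately show ?thesis by simp
  qed
  have pos': "x\<^sup>2 + y\<^sup>2 > 0" if "y \<in> {a..b}" for y
    using pos[OF that] m(4) by (smt (verit) zero_less_power)
  have fm: "set_borel_measurable borel {g a..g b} f"
    unfolding set_borel_measurable_def f_def by measurable
  have derivg: "(g has_real_derivative g' y) (at y)" if "y \<in> {a..b}" for y
    using pos'[OF that] unfolding g_def g'_def
    by (auto intro!: derivative_eq_intros simp: field_simps)
  have nz: "\<And>y. y \<in> {a..b} \<Longrightarrow> sqrt (x\<^sup>2 + y\<^sup>2) \<noteq> 0" using pos' by force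
  have contg': "continuous_on {a..b} g'"
    unfolding g'_def by (intro continuous_intros ballI nz)
  have g'0: "g' y \<ge> 0" if "y \<in> {a..b}" for y using that a0 by (auto simp: g'_def)
  have S: "(\<integral>\<^sup>+r. f r * indicator {g a..g b} r \<partial>lborel) = (\<integral>\<^sup>+y. f (g y) * g' y * indicator {a..b} y \<partial>lborel)"
    by (rule nn_integral_substitution[OF fm derivg contg' g'0 ab])
  have "(\<integral>\<^sup>+r. indicator {R/2..R} r * (ennreal (K x (sqrt (r\<^sup>2 - x\<^sup>2)) / (2 * pi * sqrt (r\<^sup>2 - x\<^sup>2))) * indicator {-r..r} x) \<partial>lborel)
      = (\<integral>\<^sup>+r. f r * indicator {g a..g b} r \<partial>lborel)"
    unfolding ga gb
  proof (intro nn_integral_cong)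
    fix r :: real
    have "indicator {R/2..R} r * indicator {-r..r} x = (indicator {m..R} r :: ennreal)"
      using m True unfolding m_def by (auto split: split_indicator)
    then show "indicator {R/2..R} r * (ennreal (K x (sqrt (r\<^sup>2 - x\<^sup>2)) / (2 * pi * sqrt (r\<^sup>2 - x\<^sup>2))) * indicator {-r..r} x)
       = ennreal (f r * indicator {m..R} r)"
      unfolding f_def by (auto split: split_indicator simp: mult_ac)
  qed
  also have "\<dots> = (\<integral>\<^sup>+y. f (g y) * g' y * indicator {a..b} y \<partial>lborel)" by (rule S)
  also have "\<dots> \<le> (\<integral>\<^sup>+y. ennreal (1 / (pi * R)) * (ennreal (K x y) * indicator {0..R} y) \<partial>lborel)"
  proof (intro nn_integral_mono)
    fix y :: real
    show "ennreal (f (g y) * g' y * indicator {a..b} y) \<le> ennreal (1 / (pi * R)) * (ennreal (K x y) * indicator {0..R} y)"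
    proof (cases "y \<in> {a..b}")
      case True
      then have y0: "y \<ge> 0" and yR: "y \<le> R" using a0 bR by auto
      have sg: "sqrt (x\<^sup>2 + y\<^sup>2) \<ge> m" using pos[OF True] m
        by (metis abs_of_pos real_sqrt_abs real_sqrt_le_mono)
      have "f (g y) * g' y \<le> 1 / (pi * R) * K x y"
      proof (cases "y = 0")
        case True then show ?thesis using K0 R by (simp add: g'_def)
      next
        case False
        then have yp: "y > 0" using y0 by simp
        have e: "f (g y) * g' y = K x y / (2 * pi * sqrt (x\<^sup>2 + y\<^sup>2))"
          using yp pos'[OF \<open>y \<in> {a..b}\<close>] by (simp add: f_def g_def g'_def)
        have "K x y / (2 * pi * sqrt (x\<^sup>2 + y\<^sup>2)) \<le> K x y / (pi * R)"
          by (intro divide_left_mono) (use K0[of y] sg m R pos'[OF \<open>y \<in> {a..b}\<close>] in \<open>auto intro!: mult_pos_pos\<close>)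
        then show ?thesis unfolding e by simp
      qed
      then show ?thesis using True y0 yR
        by (simp add: ennreal_mult'[symmetric] ennreal_leI split: split_indicator)
    qed simp
  qed
  also have "\<dots> = ennreal (1 / (pi * R)) * (\<integral>\<^sup>+y. ennreal (K x y) * indicator {0..R} y \<partial>lborel)"
    by (rule nn_integral_cmult) measurable
  moreover have "indicator {-R..R} x = (1::ennreal)" using True by (simp add: abs_le_iff)
  ultimately show ?thesis by simp
qed



lemma ind_meas[measurable]:
  fixes f g h :: "'a \<Rightarrow> real"
  assumes [measurable]: "f \<in> borel_measurable M" "g \<in> borel_measurable M" "h \<in> borel_measurable M"
  shows "(\<lambda>p. indicator {g p..h p} (f p) :: ennreal) \<in> borel_measurable M"
proof -
  have "(\<lambda>p. indicator {g p..h p} (f p) :: ennreal) = (\<lambda>p. if g p \<le> f p \<and> f p \<le> h p then 1 else 0)"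
    by (auto simp: indicator_def)
  moreover have "(\<lambda>p. if g p \<le> f p \<and> f p \<le> h p then 1 else 0 :: ennreal) \<in> borel_measurable M" by measurable
  ultimately show ?thesis by simp
qed

lemma polar_bound:
  fixes G :: "complex \<Rightarrow> real"
  assumes Gm[measurable]: "G \<in> borel_measurable borel" and G0: "\<And>w. G w \<ge> 0" and R: "R > 0"
    and mv: "\<And>r. R/2 \<le> r \<Longrightarrow> r \<le> R \<Longrightarrow>
        ennreal V \<le> (\<integral>\<^sup>+t. ennreal (G (z + complex_of_real r * exp (2 * of_real pi * \<i> * complex_of_real t))) * indicator {0..1} t \<partial>lborel)"
    and bnd: "\<And>y. 0 \<le> y \<Longrightarrow> y \<le> R \<Longrightarrow>
        (\<integral>\<^sup>+x. ennreal (G (z + Complex (-x) y) + G (z + Complex x (-y))) * indicator {-R..R} x \<partial>lborel) \<le> B"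
  shows "ennreal V * ennreal (R/2) \<le> ennreal (1/pi) * B"
proof -
  define K where "K x y = G (z + Complex (-x) y) + G (z + Complex x (-y))" for x y
  have Km[measurable]: "(\<lambda>(x, y). K x y) \<in> borel_measurable (lborel \<Otimes>\<^sub>M lborel)"
    unfolding K_def by measurable
  have Km1[measurable]: "(\<lambda>y. K x y) \<in> borel_measurable borel" for x
    unfolding K_def by measurable
  have K0: "K x y \<ge> 0" for x y using G0 by (simp add: K_def add_nonneg_nonneg)
  define Q where "Q x r = ennreal (K x (sqrt (r\<^sup>2 - x\<^sup>2)) / (2 * pi * sqrt (r\<^sup>2 - x\<^sup>2))) * indicator {-r..r} x" for x r
  have Qm[measurable]: "(\<lambda>(r, x). indicator {R/2..R} r * Q x r) \<in> borel_measurable (lborel \<Otimes>\<^sub>M lborel)"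
    unfolding Q_def K_def by measurable
  have "ennreal V * ennreal (R/2) = (\<integral>\<^sup>+r. ennreal V * indicator {R/2..R} r \<partial>lborel)"
    using R by (simp add: nn_integral_cmult_indicator)
  also have "\<dots> \<le> (\<integral>\<^sup>+r. indicator {R/2..R} r * (\<integral>\<^sup>+x. Q x r \<partial>lborel) \<partial>lborel)"
  proof (rule nn_integral_mono)
    fix r :: real
    show "ennreal V * indicator {R/2..R} r \<le> indicator {R/2..R} r * (\<integral>\<^sup>+x. Q x r \<partial>lborel)"
    proof (cases "r \<in> {R/2..R}")
      case True
      then have r0: "r > 0" using R by auto
      have "ennreal V \<le> (\<integral>\<^sup>+x. Q x r \<partial>lborel)"
        using mv[of r] True semicircle[OF Gm G0 r0, of z] unfolding Q_def K_def by auto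
      then show ?thesis using True by simp
    qed simp
  qed
  also have "\<dots> = (\<integral>\<^sup>+r. (\<integral>\<^sup>+x. indicator {R/2..R} r * Q x r \<partial>lborel) \<partial>lborel)"
    by (intro nn_integral_cong nn_integral_cmult[symmetric]) (unfold Q_def K_def, measurable)
  also have "\<dots> = (\<integral>\<^sup>+x. (\<integral>\<^sup>+r. indicator {R/2..R} r * Q x r \<partial>lborel) \<partial>lborel)"
    by (rule lborel_pair.Fubini'[symmetric]) (fact Qm)
  also have "\<dots> \<le> (\<integral>\<^sup>+x. indicator {-R..R} x * (ennreal (1 / (pi * R)) * (\<integral>\<^sup>+y. ennreal (K x y) * indicator {0..R} y \<partial>lborel)) \<partial>lborel)"
    by (intro nn_integral_mono) (unfold Q_def, rule radial[OF Km1 K0 R])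
  also have "\<dots> = (\<integral>\<^sup>+x. ennreal (1 / (pi * R)) * (\<integral>\<^sup>+y. indicator {-R..R} x * (ennreal (K x y) * indicator {0..R} y) \<partial>lborel) \<partial>lborel)"
    by (intro nn_integral_cong) (simp add: nn_integral_cmult[symmetric] mult_ac)
  also have "\<dots> = ennreal (1 / (pi * R)) * (\<integral>\<^sup>+x. (\<integral>\<^sup>+y. indicator {-R..R} x * (ennreal (K x y) * indicator {0..R} y) \<partial>lborel) \<partial>lborel)"
    by (rule nn_integral_cmult) measurable
  also have "(\<integral>\<^sup>+x. (\<integral>\<^sup>+y. indicator {-R..R} x * (ennreal (K x y) * indicator {0..R} y) \<partial>lborel) \<partial>lborel)
      = (\<integral>\<^sup>+y. (\<integral>\<^sup>+x. indicator {-R..R} x * (ennreal (K x y) * indicator {0..R} y) \<partial>lborel) \<partial>lborel)"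
    by (rule lborel_pair.Fubini') measurable
  also have "\<dots> = (\<integral>\<^sup>+y. indicator {0..R} y * (\<integral>\<^sup>+x. ennreal (K x y) * indicator {-R..R} x \<partial>lborel) \<partial>lborel)"
    by (intro nn_integral_cong) (simp add: nn_integral_cmult[symmetric] mult_ac)
  also have "\<dots> \<le> (\<integral>\<^sup>+y. B * indicator {0..R} y \<partial>lborel)"
  proof (rule nn_integral_mono)
    fix y :: real
    show "indicator {0..R} y * (\<integral>\<^sup>+x. ennreal (K x y) * indicator {-R..R} x \<partial>lborel) \<le> B * indicator {0..R} y"
      using bnd[of y] unfolding K_def by (cases "y \<in> {0..R}") (auto simp: mult.commute)
  qed
  also have "\<dots> = B * ennreal R"
    using R by (simp add: nn_integral_cmult_indicator)
  finally have "ennreal V * ennreal (R/2) \<le> ennreal (1 / (pi * R)) * (B * ennreal R)"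
    by (simp add: mult_left_mono)
  also have "\<dots> = ennreal (1/pi) * B"
    using R by (simp add: ennreal_mult'[symmetric] mult_ac ennreal_times_divide)
  finally show ?thesis .
qed



lemma abs_le_powr: "q \<ge> 1 \<Longrightarrow> \<bar>a::real\<bar> \<le> 1 + \<bar>a\<bar> powr q"
proof (cases "\<bar>a\<bar> \<le> 1")
  case False
  assume q: "q \<ge> 1"
  then have "\<bar>a\<bar> powr 1 \<le> \<bar>a\<bar> powr q" using False by (intro powr_mono) auto
  then show ?thesis using False by simp
qed (auto intro: add_increasing2)

theorem theorem4p3:
  fixes p :: "real \<Rightarrow> real" and U :: "complex \<Rightarrow> real"
  assumes "LH p"
    and "U \<in> hp_var p"
  shows "\<forall>k>0. bounded (U ` {z. Im z \<ge> k})"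
proof (intro allI impI)
  fix k :: real assume k: "k > 0"
  let ?H = upper_half_plane
  have harm: "harmonic_on U ?H" and Mfin: "(SUP y\<in>{0<..}. \<integral>\<^sup>+ x. ennreal (\<bar>U (Complex x y)\<bar> powr p x) \<partial>lborel) < \<infinity>"
    using assms(2) by (auto simp: hp_var_def)
  have pm[measurable]: "p \<in> borel_measurable borel" and p1: "\<And>x. p x > 1"
    using assms(1) by (auto simp: LH_def)
  define M where "M = (SUP y\<in>{0<..}. \<integral>\<^sup>+ x. ennreal (\<bar>U (Complex x y)\<bar> powr p x) \<partial>lborel)"
  obtain m where m: "M = ennreal m" "m \<ge> 0"
    using Mfin unfolding M_def[symmetric] by (cases M) auto
  obtain F where Fh: "F holomorphic_on ?H" and UF: "\<And>z. z \<in> ?H \<Longrightarrow> U z = Re (F z)"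
    using harmonic_re[OF harm] by blast
  have oH: "open ?H" by (simp add: upper_half_plane_def open_halfspace_Im_gt)
  have Uc: "continuous_on ?H U"
  proof -
    have "continuous_on ?H (\<lambda>z. Re (F z))"
      using Fh holomorphic_on_imp_continuous_on by (intro continuous_intros) auto
    then show ?thesis using continuous_on_cong[of ?H ?H U "\<lambda>z. Re (F z)"] UF by auto
  qed
  define G where "G w = indicator ?H w * \<bar>U w\<bar>" for w
  have Gm[measurable]: "G \<in> borel_measurable borel"
  proof -
    have "(\<lambda>w. indicator ?H w *\<^sub>R \<bar>U w\<bar>) \<in> borel_measurable borel"
      by (rule borel_measurable_continuous_on_indicator) (use oH Uc in \<open>auto intro!: continuous_intros\<close>)
    then show ?thesis by (simp add: G_def[abs_def])
  qed
  have G0: "G w \<ge> 0" for w by (simp add: G_def)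
  have GU: "G w = \<bar>U w\<bar>" if "w \<in> ?H" for w using that by (simp add: G_def)
  have Gle: "G w \<le> 1 + \<bar>U w\<bar> powr p x" for w x
  proof -
    have "G w \<le> \<bar>U w\<bar>" by (simp add: G_def indicator_def)
    also have "\<dots> \<le> 1 + \<bar>U w\<bar> powr p x" by (rule abs_le_powr) (use p1[of x] in simp)
    finally show ?thesis .
  qed
  define R where "R = k / 2"
  have R: "R > 0" using k by (simp add: R_def)
  have LB: "(\<integral>\<^sup>+x. ennreal (G (Complex (c + \<sigma> * x) Y)) * indicator {-R..R} x \<partial>lborel) \<le> ennreal (2 * R) + M"
    if Y: "Y > 0" and \<sigma>: "\<bar>\<sigma>\<bar> = 1" for c \<sigma> Y
  proof -
    have cY: "continuous_on UNIV (\<lambda>x. U (Complex x Y))"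
    proof (rule continuous_on_compose2[OF Uc])
      show "continuous_on UNIV (\<lambda>x. Complex x Y)"
        unfolding Complex_eq by (intro continuous_intros)
      show "(\<lambda>x. Complex x Y) ` UNIV \<subseteq> ?H" using Y by (auto simp: upper_half_plane_def)
    qed
    have [measurable]: "(\<lambda>x. U (Complex x Y)) \<in> borel_measurable borel"
      by (rule borel_measurable_continuous_onI[OF cY])
    define f where "f x = ennreal (\<bar>U (Complex x Y)\<bar> powr p x)" for x
    have fm[measurable]: "f \<in> borel_measurable borel" unfolding f_def by measurable
    have "(\<integral>\<^sup>+x. ennreal (G (Complex (c + \<sigma> * x) Y)) * indicator {-R..R} x \<partial>lborel)
        \<le> (\<integral>\<^sup>+x. indicator {-R..R} x + f (c + \<sigma> * x) \<partial>lborel)"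
    proof (rule nn_integral_mono)
      fix x :: real
      have "ennreal (G (Complex (c + \<sigma> * x) Y)) \<le> ennreal (1 + \<bar>U (Complex (c + \<sigma> * x) Y)\<bar> powr p (c + \<sigma> * x))"
        by (rule ennreal_leI[OF Gle])
      also have "\<dots> = 1 + f (c + \<sigma> * x)" by (simp add: f_def ennreal_plus)
      finally show "ennreal (G (Complex (c + \<sigma> * x) Y)) * indicator {-R..R} x \<le> indicator {-R..R} x + f (c + \<sigma> * x)"
        by (auto split: split_indicator)
    qed
    also have "\<dots> = (\<integral>\<^sup>+x. indicator {-R..R} x \<partial>lborel) + (\<integral>\<^sup>+x. f (c + \<sigma> * x) \<partial>lborel)"
      by (rule nn_integral_add) measurable
    also have "(\<integral>\<^sup>+x. indicator {-R..R} x \<partial>lborel) = ennreal (2 * R)" using R by simp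
    also have "(\<integral>\<^sup>+x. f (c + \<sigma> * x) \<partial>lborel) = (\<integral>\<^sup>+x. f x \<partial>lborel)"
      using nn_integral_real_affine[OF fm, of \<sigma> c] \<sigma> by auto
    also have "(\<integral>\<^sup>+x. f x \<partial>lborel) \<le> M"
      unfolding M_def f_def using Y by (intro SUP_upper) auto
    finally show ?thesis by (simp add: add_left_mono)
  qed
  have main: "\<bar>U z\<bar> \<le> 4 * (2 * R + m) / (pi * R)" if z: "Im z \<ge> k" for z
  proof -
    have mv: "ennreal \<bar>U z\<bar> \<le> (\<integral>\<^sup>+t. ennreal (G (z + complex_of_real r * exp (2 * of_real pi * \<i> * complex_of_real t))) * indicator {0..1} t \<partial>lborel)"
      if r: "R/2 \<le> r" "r \<le> R" for r
    proof -
      define P where "P t = z + complex_of_real r * exp (2 * of_real pi * \<i> * complex_of_real t)" for t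
      have r0: "r > 0" using r R by simp
      have sub: "cball z r \<subseteq> ?H"
      proof
        fix w assume "w \<in> cball z r"
        then have "cmod (z - w) \<le> r" by (simp add: dist_norm)
        moreover have "\<bar>Im (z - w)\<bar> \<le> cmod (z - w)" by (rule abs_Im_le_cmod)
        ultimately have "Im w \<ge> Im z - r" by simp
        then show "w \<in> ?H" using z r R_def k by (simp add: upper_half_plane_def)
      qed
      have PH: "P t \<in> ?H" for t
      proof -
        have "P t \<in> cball z r" using r0 by (simp add: P_def dist_norm norm_mult)
        then show ?thesis using sub by blast
      qed
      have "((\<lambda>t. Re (F (P t))) has_integral Re (F z)) {0..1}"
        unfolding P_def by (rule mean_value_re[OF Fh oH sub r0])
      moreover have "((\<lambda>t. Re (F (P t))) has_integral Re (F z)) {0..1} = ((\<lambda>t. U (P t)) has_integral Re (F z)) {0..1}"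
        by (rule has_integral_cong) (simp add: UF[OF PH])
      moreover have "U z = Re (F z)" using z k by (intro UF) (simp add: upper_half_plane_def)
      ultimately have I: "((\<lambda>t. U (P t)) has_integral U z) {0..1}" by simp
      have cP: "continuous_on {0..1} P" unfolding P_def by (intro continuous_intros)
      have cUP: "continuous_on {0..1} (\<lambda>t. U (P t))"
        by (rule continuous_on_compose2[OF Uc cP]) (use PH in auto)
      have int1: "(\<lambda>t. \<bar>U (P t)\<bar>) integrable_on {0..1}"
        by (rule integrable_continuous_interval) (intro continuous_intros cUP)
      have "\<bar>U z\<bar> = norm (integral {0..1} (\<lambda>t. U (P t)))" using I by (simp add: integral_unique)
      also have "\<dots> \<le> integral {0..1} (\<lambda>t. \<bar>U (P t)\<bar>)"
        by (rule integral_norm_bound_integral) (use I int1 in auto)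
      finally have le: "\<bar>U z\<bar> \<le> integral {0..1} (\<lambda>t. \<bar>U (P t)\<bar>)" .
      have "(\<integral>\<^sup>+t. ennreal (\<bar>U (P t)\<bar>) * indicator {0..1} t \<partial>lborel) = ennreal (integral {0..1} (\<lambda>t. \<bar>U (P t)\<bar>))"
        by (rule nn_integral_has_integral_lebesgue') (use int1 in auto)
      moreover have "(\<integral>\<^sup>+t. ennreal (\<bar>U (P t)\<bar>) * indicator {0..1} t \<partial>lborel) = (\<integral>\<^sup>+t. ennreal (G (P t)) * indicator {0..1} t \<partial>lborel)"
        using GU[OF PH] by simp
      ultimately show ?thesis using le unfolding P_def by (simp add: ennreal_leI)
    qed
    have bnd: "(\<integral>\<^sup>+x. ennreal (G (z + Complex (-x) y) + G (z + Complex x (-y))) * indicator {-R..R} x \<partial>lborel)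
        \<le> 2 * (ennreal (2 * R) + M)" if y: "0 \<le> y" "y \<le> R" for y
    proof -
      have e1: "z + Complex (-x) y = Complex (Re z + (-1) * x) (Im z + y)" for x by (simp add: complex_eq_iff)
      have e2: "z + Complex x (-y) = Complex (Re z + 1 * x) (Im z - y)" for x by (simp add: complex_eq_iff)
      have "(\<integral>\<^sup>+x. ennreal (G (z + Complex (-x) y) + G (z + Complex x (-y))) * indicator {-R..R} x \<partial>lborel)
          = (\<integral>\<^sup>+x. ennreal (G (Complex (Re z + (-1) * x) (Im z + y))) * indicator {-R..R} x
              + ennreal (G (Complex (Re z + 1 * x) (Im z - y))) * indicator {-R..R} x \<partial>lborel)"
        unfolding e1 e2 by (intro nn_integral_cong) (simp add: G0 ennreal_plus distrib_right)
      also have "\<dots> = (\<integral>\<^sup>+x. ennreal (G (Complex (Re z + (-1) * x) (Im z + y))) * indicator {-R..R} x \<partial>lborel)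
              + (\<integral>\<^sup>+x. ennreal (G (Complex (Re z + 1 * x) (Im z - y))) * indicator {-R..R} x \<partial>lborel)"
        by (rule nn_integral_add) measurable
      also have "\<dots> \<le> (ennreal (2 * R) + M) + (ennreal (2 * R) + M)"
        by (intro add_mono LB) (use y z k R_def in auto)
      finally show ?thesis by (simp only: mult_2)
    qed
    have "ennreal \<bar>U z\<bar> * ennreal (R/2) \<le> ennreal (1/pi) * (2 * (ennreal (2 * R) + M))"
      by (rule polar_bound[OF Gm G0 R mv bnd]) auto
    also have "\<dots> = ennreal ((1/pi) * (2 * (2 * R + m)))"
    proof -
      have a: "ennreal ((1/pi) * (2 * (2 * R + m))) = ennreal (1/pi) * ennreal (2 * (2 * R + m))"
        by (rule ennreal_mult') simp
      have b: "ennreal (2 * (2 * R + m)) = 2 * ennreal (2 * R + m)" by (subst ennreal_mult') simp_all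
      have c: "ennreal (2 * R + m) = ennreal (2 * R) + M" using m R by (simp add: ennreal_plus)
      show ?thesis by (simp only: a b c)
    qed
    finally have X: "ennreal \<bar>U z\<bar> * ennreal (R/2) \<le> ennreal ((1/pi) * (2 * (2 * R + m)))" .
    have e: "ennreal (\<bar>U z\<bar> * (R/2)) = ennreal \<bar>U z\<bar> * ennreal (R/2)" by (rule ennreal_mult') simp
    have "ennreal (\<bar>U z\<bar> * (R/2)) \<le> ennreal ((1/pi) * (2 * (2 * R + m)))"
      unfolding e by (rule X)
    then have "\<bar>U z\<bar> * (R/2) \<le> (1/pi) * (2 * (2 * R + m))"
      using m R by (subst (asm) ennreal_le_iff) auto
    then show ?thesis using R by (simp add: field_simps)
  qed
  show "bounded (U ` {z. Im z \<ge> k})"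
    unfolding bounded_iff using main by auto
qed

end
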